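(* Let $a\in[-1,1)$ and $\psi_a=\mathds{1}_{[a,1]}$ on $[-1,1]$ (i.e. $\psi_a(t)=0$ for $t\in[-1,a)$ and $\psi_a(t)=1$ for $t\in[a,1]$). Write $P_{\mathcal{A}_+}(\psi_a)=\sum_{n=0}^\infty c_nt^n$ with $c_n\ge0$, and let $S(a)=\{n\in\mathbb{N}: c_n>0\}$. Then $S(a)=\{0,1,2\}$ if and only if $0<a\le\frac{1}{\sqrt5}$. Moreover, for every $a\in(0,1/\sqrt5]$, \[ P_{\mathcal{A}_+}(\psi_a)=\frac18(4-9a+5a^3)+\frac34(1-a^2)t+\frac{15}{8}(a-a^3)t^2. \]
   Context: $\mathbb{N}=\{0,1,2,\dots\}$. $\mathcal{A}_+=\{\sum_{n=0}^\infty a_nt^n : a_n\ge0,\ \text{the series converges in }L^2([-1,1])\}$ (real $L^2$ for Lebesgue measure, convergence of partial sums); it is a closed convex cone, $P_{\mathcal{A}_+}$ denotes the metric projection onto it (the unique nearest point), and every element of $\mathcal{A}_+$ has a unique representation $\sum_n c_nt^n$ with $c_n\ge0$, so $S(a)$ is well defined. *)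

theory Defs
  imports "HOL-Analysis.Analysis"
begin

text \<open>Squared distance in real L^2([-1,1]) (Lebesgue measure), as an extended
  nonnegative real, so that it is meaningful for arbitrary measurable functions.\<close>
definition L2sq :: "(real \<Rightarrow> real) \<Rightarrow> (real \<Rightarrow> real) \<Rightarrow> ennreal" where
  "L2sq f g = (\<integral>\<^sup>+ t. indicator {-1..1} t * ennreal ((f t - g t)^2) \<partial>lborel)"

definition inL2 :: "(real \<Rightarrow> real) \<Rightarrow> bool" where
  "inL2 f \<longleftrightarrow> f \<in> borel_measurable lborel \<and> L2sq f (\<lambda>_. 0) < \<infinity>"

definition represents :: "(nat \<Rightarrow> real) \<Rightarrow> (real \<Rightarrow> real) \<Rightarrow> bool" where
  "represents c f \<longleftrightarrow> (\<forall>n. 0 \<le> c n) \<and> inL2 f \<and>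
     ((\<lambda>N. L2sq (\<lambda>t. \<Sum>n<N. c n * t ^ n) f) \<longlonglongrightarrow> 0)"

definition Aplus :: "(real \<Rightarrow> real) set" where
  "Aplus = {f. \<exists>c. represents c f}"

text \<open>P is the metric projection of h onto A_+ (a nearest point; unique up to a.e.).\<close>
definition is_proj_Aplus :: "(real \<Rightarrow> real) \<Rightarrow> (real \<Rightarrow> real) \<Rightarrow> bool" where
  "is_proj_Aplus h P \<longleftrightarrow> P \<in> Aplus \<and> (\<forall>g\<in>Aplus. L2sq h P \<le> L2sq h g)"

definition psi :: "real \<Rightarrow> real \<Rightarrow> real" where
  "psi a t = (if a \<le> t \<and> t \<le> 1 then 1 else 0)"

end

theory Submission
  imports Defs
begin


definition ip :: "(real \<Rightarrow> real) \<Rightarrow> (real \<Rightarrow> real) \<Rightarrow> real" where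
  "ip u v = (\<integral>t. indicator {-1..1} t * (u t * v t) \<partial>lborel)"

lemma ind_ennreal: "indicator A t * ennreal x = ennreal (indicator A t * x)"
  by (simp split: split_indicator)

lemma L2sq_alt: "L2sq f g = (\<integral>\<^sup>+ t. ennreal (indicator {-1..1} t * (f t - g t)^2) \<partial>lborel)"
  unfolding L2sq_def by (simp add: ind_ennreal)

lemma inL2_meas: "inL2 f \<Longrightarrow> f \<in> borel_measurable lborel"
  by (simp add: inL2_def)

lemma inL2_sq_int: assumes "inL2 f"
  shows "integrable lborel (\<lambda>t. indicator {-1..1} t * (f t)^2)"
proof (rule integrableI_nonneg)
  have [measurable]: "f \<in> borel_measurable borel" using assms by (simp add: inL2_def)
  show "(\<lambda>t. indicator {-1..1} t * (f t)^2) \<in> borel_measurable lborel"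
    by measurable
  show "AE x in lborel. 0 \<le> indicator {-1..1} x * (f x)\<^sup>2" by simp
  show "(\<integral>\<^sup>+ x. ennreal (indicator {-1..1} x * (f x)\<^sup>2) \<partial>lborel) < \<infinity>"
    using assms unfolding inL2_def L2sq_alt by simp
qed

lemma inL2_bounded:
  assumes "f \<in> borel_measurable lborel" "\<And>t. t \<in> {-1..1} \<Longrightarrow> \<bar>f t\<bar> \<le> B"
  shows "inL2 f"
proof -
  have "L2sq f (\<lambda>_. 0) \<le> (\<integral>\<^sup>+ t. ennreal (B^2) * indicator {-1..1} (t::real) \<partial>lborel)"
    unfolding L2sq_def
  proof (rule nn_integral_mono)
    fix t :: real
    show "indicator {-1..1} t * ennreal ((f t - 0)\<^sup>2) \<le> ennreal (B\<^sup>2) * indicator {- 1..1} t"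
    proof (cases "t \<in> {-1..1}")
      case True
      then have "\<bar>f t\<bar> \<le> B" using assms by auto
      then have "\<bar>f t\<bar>^2 \<le> B^2" by (intro power_mono) auto
      then have "(f t - 0)^2 \<le> B^2" by simp
      then have "ennreal ((f t - 0)^2) \<le> ennreal (B^2)" by (rule ennreal_leI)
      then show ?thesis using True by simp
    qed simp
  qed
  also have "\<dots> = ennreal (B^2) * emeasure lborel {-1..1::real}"
    by (rule nn_integral_cmult_indicator) simp
  also have "\<dots> = ennreal (B^2) * 2" by simp
  also have "\<dots> < \<infinity>" by (simp add: ennreal_mult_less_top)
  finally show ?thesis using assms(1) unfolding inL2_def by simp
qed

lemma inL2_add: "inL2 f \<Longrightarrow> inL2 g \<Longrightarrow> inL2 (\<lambda>t. f t + g t)"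
proof -
  assume f: "inL2 f" and g: "inL2 g"
  have "L2sq (\<lambda>t. f t + g t) (\<lambda>_. 0) \<le> (\<integral>\<^sup>+ t. 2 * ennreal (indicator {-1..1} t * (f t)^2) + 2 * ennreal (indicator {-1..1} t * (g t)^2) \<partial>lborel)"
    unfolding L2sq_alt
  proof (rule nn_integral_mono)
    fix t
    have "(f t + g t)^2 \<le> 2 * (f t)^2 + 2 * (g t)^2"
      by (smt (verit) sum_squares_ge_zero power2_sum zero_le_power2 power2_diff)
    then have "indicator {-1..1} t * (f t + g t - 0)^2 \<le> 2 * (indicator {-1..1} t * (f t)^2) + 2 * (indicator {-1..1} t * (g t)^2)"
      by (simp split: split_indicator)
    then show "ennreal (indicator {-1..1} t * (f t + g t - 0)^2) \<le> 2 * ennreal (indicator {-1..1} t * (f t)^2) + 2 * ennreal (indicator {-1..1} t * (g t)^2)"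
    proof -
      have "ennreal (indicator {-1..1} t * (f t + g t - 0)^2) \<le> ennreal (2 * (indicator {-1..1} t * (f t)^2) + 2 * (indicator {-1..1} t * (g t)^2))"
        by (rule ennreal_leI) fact
      also have "\<dots> = 2 * ennreal (indicator {-1..1} t * (f t)^2) + 2 * ennreal (indicator {-1..1} t * (g t)^2)"
        by (subst ennreal_plus) (auto simp: ennreal_mult)
      finally show ?thesis .
    qed
  qed
  also have "\<dots> = 2 * L2sq f (\<lambda>_. 0) + 2 * L2sq g (\<lambda>_. 0)"
    unfolding L2sq_alt using f g
    by (subst nn_integral_add) (auto simp: nn_integral_cmult inL2_def)
  also have "\<dots> < \<infinity>" using f g unfolding inL2_def by (simp add: ennreal_mult_less_top)
  finally have 1: "L2sq (\<lambda>t. f t + g t) (\<lambda>_. 0) < \<infinity>" .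
  have [measurable]: "f \<in> borel_measurable borel" "g \<in> borel_measurable borel" using f g unfolding inL2_def by simp_all
  have "(\<lambda>t. f t + g t) \<in> borel_measurable borel" by measurable
  with 1 show ?thesis unfolding inL2_def by simp
qed

lemma inL2_cmult: "inL2 f \<Longrightarrow> inL2 (\<lambda>t. r * f t)"
proof -
  assume f: "inL2 f"
  have "L2sq (\<lambda>t. r * f t) (\<lambda>_. 0) = (\<integral>\<^sup>+ t. ennreal (r^2) * ennreal (indicator {-1..1} t * (f t)^2) \<partial>lborel)"
    unfolding L2sq_alt
  proof (intro nn_integral_cong)
    fix t
    have "indicator {-1..1} t * (r * f t - 0)^2 = r^2 * (indicator {-1..1} t * (f t)^2)"
      by (simp add: power_mult_distrib)
    then show "ennreal (indicator {-1..1} t * (r * f t - 0)^2) = ennreal (r^2) * ennreal (indicator {-1..1} t * (f t)^2)"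
      by (simp only: ennreal_mult[symmetric] zero_le_power2 mult_nonneg_nonneg indicator_pos_le)
  qed
  also have "\<dots> = ennreal (r^2) * L2sq f (\<lambda>_. 0)"
    unfolding L2sq_alt using f by (subst nn_integral_cmult) (auto simp: inL2_def)
  also have "\<dots> < \<infinity>" using f unfolding inL2_def by (simp add: ennreal_mult_less_top)
  finally have 1: "L2sq (\<lambda>t. r * f t) (\<lambda>_. 0) < \<infinity>" .
  have [measurable]: "f \<in> borel_measurable borel" using f unfolding inL2_def by simp
  have "(\<lambda>t. r * f t) \<in> borel_measurable borel" by measurable
  with 1 show ?thesis unfolding inL2_def by simp
qed

lemma inL2_diff: "inL2 f \<Longrightarrow> inL2 g \<Longrightarrow> inL2 (\<lambda>t. f t - g t)"
  using inL2_add[of f "\<lambda>t. (-1) * g t"] inL2_cmult[of g "-1"] by simp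



lemma pt: fixes l x y :: real assumes "0 < l" shows "2 * \<bar>x * y\<bar> \<le> l * (x * x) + (y * y) / l"
proof -
  have "0 \<le> (l*\<bar>x\<bar> - \<bar>y\<bar>)^2" by simp
  also have "\<dots> = l * (l * (x * x) + (y * y) / l - 2 * \<bar>x * y\<bar>)"
    using assms by (simp add: power2_eq_square algebra_simps abs_mult)
  finally have "0 \<le> l * (l * (x * x) + (y * y) / l - 2 * \<bar>x * y\<bar>)" .
  then show ?thesis using assms by (simp add: zero_le_mult_iff)
qed

lemma ip_int: assumes "inL2 u" "inL2 v"
  shows "integrable lborel (\<lambda>t. indicator {-1..1} t * (u t * v t))"
proof (rule Bochner_Integration.integrable_bound[where f="\<lambda>t. indicator {-1..1} t * (u t)^2 + indicator {-1..1} t * (v t)^2"])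
  show "integrable lborel (\<lambda>t. indicator {-1..1} t * (u t)^2 + indicator {-1..1} t * (v t)^2)"
    using inL2_sq_int[OF assms(1)] inL2_sq_int[OF assms(2)] by simp
  have [measurable]: "u \<in> borel_measurable borel" "v \<in> borel_measurable borel"
    using assms unfolding inL2_def by simp_all
  show "(\<lambda>t. indicator {-1..1} t * (u t * v t)) \<in> borel_measurable lborel" by measurable
  show "AE x in lborel. norm (indicator {-1..1} x * (u x * v x)) \<le> norm (indicator {-1..1} x * (u x)^2 + indicator {-1..1} x * (v x)^2)"
  proof (rule AE_I2)
    fix x
    have "\<bar>u x * v x\<bar> \<le> (u x)^2 + (v x)^2"
      using pt[of 1 "u x" "v x"] by (simp add: power2_eq_square)
    then show "norm (indicator {-1..1} x * (u x * v x)) \<le> norm (indicator {-1..1} x * (u x)^2 + indicator {-1..1} x * (v x)^2)"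
      by (simp split: split_indicator)
  qed
qed

lemma ip_comm: "ip u v = ip v u"
  unfolding ip_def by (simp add: mult.commute)

lemma ip_add_left: assumes "inL2 u" "inL2 v" "inL2 w" shows "ip (\<lambda>t. u t + v t) w = ip u w + ip v w"
proof -
  have "ip (\<lambda>t. u t + v t) w = (\<integral>t. indicator {-1..1} t * (u t * w t) + indicator {-1..1} t * (v t * w t) \<partial>lborel)"
    unfolding ip_def by (simp add: algebra_simps)
  also have "\<dots> = ip u w + ip v w" unfolding ip_def
    by (rule Bochner_Integration.integral_add) (use ip_int assms in auto)
  finally show ?thesis .
qed

lemma ip_cmult_left: "ip (\<lambda>t. r * u t) w = r * ip u w"
  unfolding ip_def by (subst integral_mult_right_zero[symmetric]) (simp add: algebra_simps)

lemma ip_diff_left: assumes "inL2 u" "inL2 v" "inL2 w" shows "ip (\<lambda>t. u t - v t) w = ip u w - ip v w"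
proof -
  have "ip (\<lambda>t. u t - v t) w = (\<integral>t. indicator {-1..1} t * (u t * w t) - indicator {-1..1} t * (v t * w t) \<partial>lborel)"
    unfolding ip_def by (simp add: algebra_simps)
  also have "\<dots> = ip u w - ip v w" unfolding ip_def
    by (rule Bochner_Integration.integral_diff) (use ip_int assms in auto)
  finally show ?thesis .
qed

lemma inL2_sum: "finite A \<Longrightarrow> (\<And>j. j \<in> A \<Longrightarrow> inL2 (f j)) \<Longrightarrow> inL2 (\<lambda>t. \<Sum>j\<in>A. f j t)"
proof (induction A rule: finite_induct)
  case empty
  then show ?case by (intro inL2_bounded[where B=0]) auto
next
  case (insert x F)
  then show ?case using inL2_add[of "f x" "\<lambda>t. \<Sum>j\<in>F. f j t"] by simp
qed

lemma ip_sum_left: "finite A \<Longrightarrow> (\<And>j. j \<in> A \<Longrightarrow> inL2 (f j)) \<Longrightarrow> inL2 w \<Longrightarrow>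
   ip (\<lambda>t. \<Sum>j\<in>A. f j t) w = (\<Sum>j\<in>A. ip (f j) w)"
proof (induction A rule: finite_induct)
  case empty
  then show ?case by (simp add: ip_def)
next
  case (insert x F)
  then show ?case using ip_add_left[of "f x" "\<lambda>t. \<Sum>j\<in>F. f j t" w] inL2_sum[of F f] by simp
qed

lemma L2sq_ip: assumes "inL2 u" "inL2 v"
  shows "L2sq u v = ennreal (ip (\<lambda>t. u t - v t) (\<lambda>t. u t - v t))"
proof -
  have d: "inL2 (\<lambda>t. u t - v t)" using inL2_diff[OF assms] .
  show ?thesis unfolding L2sq_alt ip_def
    using inL2_sq_int[OF d] by (subst nn_integral_eq_integral) (auto simp: power2_eq_square)
qed

lemma ip_self_nonneg: "0 \<le> ip u u"
  unfolding ip_def by (rule integral_nonneg_AE) (simp split: split_indicator)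

lemma ip_amgm: assumes "inL2 u" "inL2 v" "0 < l"
  shows "\<bar>ip u v\<bar> \<le> (l * ip u u + ip v v / l) / 2"
proof -
  have iu: "integrable lborel (\<lambda>t. indicator {-1..1} t * (u t * u t))" using ip_int[OF assms(1,1)] .
  have iv: "integrable lborel (\<lambda>t. indicator {-1..1} t * (v t * v t))" using ip_int[OF assms(2,2)] .
  have iuv: "integrable lborel (\<lambda>t. indicator {-1..1} t * (u t * v t))" using ip_int[OF assms(1,2)] .
  note pt = pt[OF assms(3)]
  have "ip u v \<le> (l * ip u u + ip v v / l) / 2"
  proof -
    have "ip u v \<le> (\<integral>t. (l * (indicator {-1..1} t * (u t * u t)) + (indicator {-1..1} t * (v t * v t)) / l) / 2 \<partial>lborel)"
      unfolding ip_def
    proof (rule integral_mono)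
      fix t show "indicator {-1..1} t * (u t * v t) \<le> (l * (indicator {-1..1} t * (u t * u t)) + (indicator {-1..1} t * (v t * v t)) / l) / 2"
        using pt[of "u t" "v t"] abs_ge_self[of "u t * v t"] by (simp split: split_indicator)
    qed (use iu iv iuv in auto)
    also have "\<dots> = (l * ip u u + ip v v / l) / 2" unfolding ip_def using iu iv by simp
    finally show ?thesis .
  qed
  moreover have "- ip u v \<le> (l * ip u u + ip v v / l) / 2"
  proof -
    have "- ip u v = (\<integral>t. - (indicator {-1..1} t * (u t * v t)) \<partial>lborel)" unfolding ip_def by simp
    also have "\<dots> \<le> (\<integral>t. (l * (indicator {-1..1} t * (u t * u t)) + (indicator {-1..1} t * (v t * v t)) / l) / 2 \<partial>lborel)"
    proof (rule integral_mono)
      fix t show "- (indicator {-1..1} t * (u t * v t)) \<le> (l * (indicator {-1..1} t * (u t * u t)) + (indicator {-1..1} t * (v t * v t)) / l) / 2"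
        using pt[of "u t" "v t"] abs_ge_minus_self[of "u t * v t"] by (simp split: split_indicator)
    qed (use iu iv iuv in auto)
    also have "\<dots> = (l * ip u u + ip v v / l) / 2" unfolding ip_def using iu iv by simp
    finally show ?thesis .
  qed
  ultimately show ?thesis by linarith
qed

lemma ip_zero: assumes "inL2 u" "inL2 w" "ip u u = 0" shows "ip u w = 0"
proof -
  have "\<bar>ip u w\<bar> \<le> e" if "e > 0" for e
  proof -
    define L where "L = ip w w / e + 1"
    have W: "0 \<le> ip w w" by (rule ip_self_nonneg)
    have L: "0 < L" unfolding L_def using W that by (simp add: add_nonneg_pos)
    have "\<bar>ip u w\<bar> \<le> (L * ip u u + ip w w / L) / 2" by (rule ip_amgm[OF assms(1,2) L])
    also have "\<dots> = (ip w w / L) / 2" using assms(3) by simp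
    also have "ip w w / L \<le> e"
    proof -
      have "ip w w \<le> e * L" unfolding L_def using that by (simp add: field_simps)
      then show ?thesis using L by (simp add: divide_le_eq)
    qed
    then have "(ip w w / L) / 2 \<le> e" using that by simp
    finally show ?thesis .
  qed
  then show ?thesis by (metis abs_le_zero_iff dense not_le)
qed



definition pw :: "nat \<Rightarrow> real \<Rightarrow> real" where "pw n = (\<lambda>t. t ^ n)"
definition pf :: "(nat \<Rightarrow> real) \<Rightarrow> nat \<Rightarrow> real \<Rightarrow> real" where
  "pf d m = (\<lambda>t. \<Sum>j<m. d j * t ^ j)"
definition mom :: "nat \<Rightarrow> real" where "mom k = (1 - (-1) ^ Suc k) / Suc k"

lemma mom_parity: "mom k = (if even k then 2 / (k + 1) else 0)"
  unfolding mom_def by auto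

lemma psi_ind: "psi a = (\<lambda>t. indicator {a..1} t)"
  unfolding psi_def by (auto simp: fun_eq_iff split: split_indicator)

lemma inL2_psi: "inL2 (psi a)"
  unfolding psi_ind by (rule inL2_bounded[where B=1]) (auto split: split_indicator)

lemma inL2_pw: "inL2 (pw n)"
proof (rule inL2_bounded[where B=1])
  show "pw n \<in> borel_measurable lborel" unfolding pw_def by measurable
  fix t :: real assume "t \<in> {-1..1}"
  then have "\<bar>t\<bar> \<le> 1" by auto
  then show "\<bar>pw n t\<bar> \<le> 1" unfolding pw_def by (simp add: power_abs power_le_one)
qed

lemma inL2_pf: "inL2 (pf d m)"
proof -
  have "inL2 (\<lambda>t. \<Sum>j\<in>{..<m}. (\<lambda>j t. d j * pw j t) j t)"
    by (rule inL2_sum) (auto intro: inL2_cmult inL2_pw)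
  then show ?thesis unfolding pf_def pw_def by simp
qed

lemma ip_pw_pw: "ip (pw m) (pw n) = mom (m + n)"
proof -
  have "ip (pw m) (pw n) = (\<integral>x. x^(m+n) * indicator {-1..1} x \<partial>lborel)"
    unfolding ip_def pw_def by (simp add: power_add mult.commute)
  also have "\<dots> = mom (m+n)" by (subst integral_power) (auto simp: mom_def)
  finally show ?thesis .
qed

lemma ip_psi_pw: assumes "-1 \<le> a" "a \<le> 1"
  shows "ip (psi a) (pw n) = (1 - a ^ Suc n) / Suc n"
proof -
  have "ip (psi a) (pw n) = (\<integral>x. x^n * indicator {a..1} x \<partial>lborel)"
    unfolding ip_def pw_def psi_ind using assms
    by (intro Bochner_Integration.integral_cong) (auto split: split_indicator)
  also have "\<dots> = (1 - a ^ Suc n) / Suc n" using assms by (subst integral_power) auto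
  finally show ?thesis .
qed

lemma ip_pf_pw: "ip (pf d m) (pw k) = (\<Sum>j<m. d j * mom (j + k))"
proof -
  have "ip (pf d m) (pw k) = ip (\<lambda>t. \<Sum>j\<in>{..<m}. (\<lambda>j t. d j * pw j t) j t) (pw k)"
    unfolding pf_def pw_def by simp
  also have "\<dots> = (\<Sum>j<m. ip (\<lambda>t. d j * pw j t) (pw k))"
    by (rule ip_sum_left) (auto intro: inL2_cmult inL2_pw)
  also have "\<dots> = (\<Sum>j<m. d j * mom (j + k))"
    by (simp add: ip_cmult_left ip_pw_pw)
  finally show ?thesis .
qed

lemma pf_diff: "(\<lambda>t. pf c m t - pf e m t) = pf (\<lambda>j. c j - e j) m"
  unfolding pf_def by (auto simp: fun_eq_iff sum_subtractf[symmetric] algebra_simps)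

lemma ip_diff_right: "inL2 u \<Longrightarrow> inL2 v \<Longrightarrow> inL2 w \<Longrightarrow> ip w (\<lambda>t. u t - v t) = ip w u - ip w v"
  using ip_diff_left[of u v w] by (simp add: ip_comm)

lemma ip_cmult_right: "ip w (\<lambda>t. r * u t) = r * ip w u"
  using ip_cmult_left[of r u w] by (simp add: ip_comm)

lemma ip_pf_left: "inL2 w \<Longrightarrow> ip (pf d m) w = (\<Sum>j<m. d j * ip (pw j) w)"
proof -
  assume w: "inL2 w"
  have "ip (pf d m) w = ip (\<lambda>t. \<Sum>j\<in>{..<m}. (\<lambda>j t. d j * pw j t) j t) w"
    unfolding pf_def pw_def by simp
  also have "\<dots> = (\<Sum>j<m. ip (\<lambda>t. d j * pw j t) w)"
    by (rule ip_sum_left) (auto intro: inL2_cmult inL2_pw w)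
  also have "\<dots> = (\<Sum>j<m. d j * ip (pw j) w)"
    by (simp add: ip_cmult_left)
  finally show ?thesis .
qed



lemma represents_pf: "represents c P \<Longrightarrow> ((\<lambda>N. L2sq (pf c N) P) \<longlonglongrightarrow> 0)"
  unfolding represents_def pf_def by simp

lemma L2sq_ip': "inL2 u \<Longrightarrow> inL2 v \<Longrightarrow> L2sq u v \<le> L2sq u w \<Longrightarrow> inL2 w \<Longrightarrow>
   ip (\<lambda>t. u t - v t) (\<lambda>t. u t - v t) \<le> ip (\<lambda>t. u t - w t) (\<lambda>t. u t - w t)"
  by (simp add: L2sq_ip ip_self_nonneg)

lemma perturb_core:
  assumes h: "inL2 h" and proj: "is_proj_Aplus h P" and rep: "represents c P"
    and e: "0 \<le> c k + e"
  shows "2 * e * ip (\<lambda>t. h t - P t) (pw k) \<le> e^2 * mom (2*k)"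
proof -
  define c' where "c' n = c n + (if n = k then e else 0)" for n
  define g where "g t = P t + e * pw k t" for t
  have P: "inL2 P" using rep unfolding represents_def by simp
  have g: "inL2 g" unfolding g_def by (intro inL2_add P inL2_cmult inL2_pw)
  have pfc': "pf c' N t = pf c N t + (if k < N then e * t ^ k else 0)" for N t
  proof -
    have "pf c' N t = (\<Sum>j<N. c j * t^j) + (\<Sum>j<N. (if j = k then e * t^j else 0))"
      unfolding pf_def c'_def by (subst sum.distrib[symmetric]) (rule sum.cong, auto simp: distrib_right)
    also have "(\<Sum>j<N. (if j = k then e * t^j else 0)) = (if k < N then e * t ^ k else 0)"
      by (subst sum.delta) auto
    finally show ?thesis unfolding pf_def .
  qed
  have ev: "\<forall>\<^sub>F N in sequentially. L2sq (pf c N) P = L2sq (pf c' N) g"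
    using eventually_gt_at_top[of k]
    by eventually_elim (simp add: L2sq_def pfc' g_def pw_def)
  have "represents c' g"
    unfolding represents_def
  proof (intro conjI allI)
    fix n show "0 \<le> c' n" using rep e unfolding represents_def c'_def by auto
  next
    show "inL2 g" by (fact g)
  next
    have "(\<lambda>N. L2sq (pf c' N) g) \<longlonglongrightarrow> 0"
      using tendsto_cong[OF ev] represents_pf[OF rep] by simp
    then show "(\<lambda>N. L2sq (\<lambda>t. \<Sum>n<N. c' n * t ^ n) g) \<longlonglongrightarrow> 0" unfolding pf_def by simp
  qed
  then have "g \<in> Aplus" unfolding Aplus_def by blast
  then have le: "L2sq h P \<le> L2sq h g" using proj unfolding is_proj_Aplus_def by blast
  define D where "D t = h t - P t" for t
  have Dl: "inL2 D" unfolding D_def by (intro inL2_diff h P)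
  have "ip D D \<le> ip (\<lambda>t. h t - g t) (\<lambda>t. h t - g t)"
    using L2sq_ip'[OF h P le g] unfolding D_def .
  also have "(\<lambda>t. h t - g t) = (\<lambda>t. D t - e * pw k t)" unfolding D_def g_def by auto
  finally have 1: "ip D D \<le> ip (\<lambda>t. D t - e * pw k t) (\<lambda>t. D t - e * pw k t)" .
  have ek: "inL2 (\<lambda>t. e * pw k t)" by (intro inL2_cmult inL2_pw)
  define E where "E t = D t - e * pw k t" for t
  have El: "inL2 E" unfolding E_def by (intro inL2_diff Dl ek)
  have "ip E E = ip D E - ip (\<lambda>t. e * pw k t) E"
    unfolding E_def[abs_def] by (rule ip_diff_left[OF Dl ek El[unfolded E_def[abs_def]]])
  also have "ip (\<lambda>t. e * pw k t) E = e * ip (pw k) E" by (rule ip_cmult_left)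
  also have "ip D E = ip D D - ip D (\<lambda>t. e * pw k t)"
    unfolding E_def[abs_def] by (rule ip_diff_right[OF Dl ek Dl])
  also have "ip D (\<lambda>t. e * pw k t) = e * ip D (pw k)" by (rule ip_cmult_right)
  also have "ip (pw k) E = ip (pw k) D - ip (pw k) (\<lambda>t. e * pw k t)"
    unfolding E_def[abs_def] by (rule ip_diff_right[OF Dl ek inL2_pw])
  also have "ip (pw k) (\<lambda>t. e * pw k t) = e * ip (pw k) (pw k)" by (rule ip_cmult_right)
  also have "ip (pw k) D = ip D (pw k)" by (rule ip_comm)
  also have "ip (pw k) (pw k) = mom (2*k)" by (simp add: ip_pw_pw mult_2)
  finally have 2: "ip E E = ip D D - e * ip D (pw k) - e * (ip D (pw k) - e * mom (2 * k))" .
  have "ip (\<lambda>t. D t - e * pw k t) (\<lambda>t. D t - e * pw k t) = ip E E" unfolding E_def[abs_def] ..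
  then show ?thesis using 1 2 unfolding D_def by (simp add: power2_eq_square algebra_simps)
qed

lemma perturb_le:
  assumes h: "inL2 h" and proj: "is_proj_Aplus h P" and rep: "represents c P"
  shows "ip (\<lambda>t. h t - P t) (pw k) \<le> 0"
proof (rule ccontr)
  define X where "X = ip (\<lambda>t. h t - P t) (pw k)"
  define Y where "Y = mom (2*k)"
  have Y: "0 \<le> Y" unfolding Y_def mom_parity by auto
  assume "\<not> ip (\<lambda>t. h t - P t) (pw k) \<le> 0"
  then have X: "X > 0" unfolding X_def by simp
  define e where "e = X / (Y + 1)"
  have e: "e > 0" unfolding e_def using X Y by simp
  have "0 \<le> c k" using rep unfolding represents_def by simp
  then have "2 * e * X \<le> e^2 * Y" unfolding X_def Y_def
    using perturb_core[OF h proj rep, of k e] e by simp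
  then have "2 * X \<le> e * Y" using e by (simp add: power2_eq_square mult.assoc)
  also have "e * Y < X" unfolding e_def using X Y by (simp add: field_simps)
  finally show False using X by simp
qed

lemma perturb_eq:
  assumes h: "inL2 h" and proj: "is_proj_Aplus h P" and rep: "represents c P" and ck: "c k > 0"
  shows "ip (\<lambda>t. h t - P t) (pw k) = 0"
proof (rule ccontr)
  define X where "X = ip (\<lambda>t. h t - P t) (pw k)"
  define Y where "Y = mom (2*k)"
  have Y: "0 \<le> Y" unfolding Y_def mom_parity by auto
  have "X \<le> 0" unfolding X_def by (rule perturb_le[OF h proj rep])
  moreover assume "ip (\<lambda>t. h t - P t) (pw k) \<noteq> 0"
  ultimately have X: "X < 0" unfolding X_def by simp
  define m where "m = min (c k) (- X / (Y + 1))"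
  have "0 < -X/(Y+1)" using X Y by (intro divide_pos_pos) auto
  then have m: "m > 0" unfolding m_def using ck by simp
  have "0 \<le> c k + (- m)" unfolding m_def by simp
  then have "2 * (- m) * X \<le> (- m)^2 * Y" unfolding X_def Y_def
    using perturb_core[OF h proj rep, of k "- m"] by simp
  then have "m * (- 2 * X) \<le> m * (m * Y)" by (simp add: power2_eq_square algebra_simps)
  then have "- 2 * X \<le> m * Y" using m by (rule mult_left_le_imp_le)
  also have "m * Y \<le> (- X / (Y + 1)) * Y" unfolding m_def using Y by (intro mult_right_mono) auto
  also have "(- X / (Y + 1)) * Y = (-X) * (Y / (Y+1))" by simp
  also have "\<dots> < (-X) * 1" using X Y by (intro mult_strict_left_mono) auto
  finally show False using X by simp
qed



lemma frac2: fixes U V y z :: real assumes "0 < y" "0 < z"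
  shows "U/y - V/z = (U*z - V*y)/(y*z)"
  using assms by (simp add: field_simps)

lemma frac2_neg: fixes U V y z :: real assumes "0 < y" "0 < z" "U*z - V*y < 0"
  shows "U/y - V/z < 0"
  using assms by (simp add: frac2 divide_neg_pos)

lemma frac2_le: fixes U V y z :: real assumes "0 < y" "0 < z" "U*z - V*y \<le> 0"
  shows "U/y - V/z \<le> 0"
  using assms by (simp add: frac2 divide_nonpos_pos)

lemma odd_neg:
  fixes b :: real and m :: nat
  assumes b0: "0 < b" and b1: "b \<le> 1/5" and m: "2 \<le> m"
  shows "(1 - b^(m+1)) / (2*real m+2) - 3*(1-b)/(2*(2*real m+3)) < 0"
proof -
  define S where "S = (\<Sum>i<m+1. b^i)"
  have S0: "0 \<le> S" unfolding S_def using b0 by (intro sum_nonneg) auto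
  have h: "b^(m+1) - 1 = (b - 1) * S" unfolding S_def by (rule power_diff_1_eq)
  have eq: "1 - b^(m+1) = (1-b) * S" by (metis h minus_diff_eq mult_minus_left)
  have "(1-b) * S < 1" using eq b0 by (simp add: algebra_simps)
  moreover have "4/5 * S \<le> (1-b) * S" using b1 S0 by (intro mult_right_mono) auto
  ultimately have S54: "S < 5/4" by simp
  have "S * (2*real m+3) < 5/4 * (2*real m+3)" using S54 by (intro mult_strict_right_mono) auto
  also have "\<dots> \<le> 3 * (real m+1)" using m by simp
  finally have key: "S * (2*real m+3) < 3*(real m+1)" .
  have "(1 - b^(m+1)) * (2*(2*real m+3)) - 3*(1-b) * (2*real m+2) = 2 * (1-b) * (S * (2*real m+3) - 3*(real m+1))"
    unfolding eq by (simp add: algebra_simps)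
  also have "\<dots> < 0" using key b1 by (intro mult_pos_neg) auto
  finally show ?thesis by (intro frac2_neg) auto
qed

lemma even_neg:
  fixes a :: real and n :: nat
  assumes a0: "0 < a" and a1: "a^2 \<le> 1/5" and n: "4 \<le> n"
  shows "(1 - a^(n+1) - 2*((4 - 9*a + 5*a^3)/8))/(real n+1) - 2*(15/8*(a - a^3))/(real n+3) < 0"
proof -
  have "10*real n*a^2 \<le> 10*real n*(1/5)" using a1 by (intro mult_left_mono) auto
  moreover have "0 \<le> 4*(real n+3)*a^n" using a0 by simp
  moreover have "real n \<ge> 4" using n by simp
  ultimately have "12 - 6*real n + 10*real n*a^2 - 4*(real n+3)*a^n < 0" by linarith
  then have neg: "a * (12 - 6*real n + 10*real n*a^2 - 4*(real n+3)*a^n) < 0" using a0 by (simp add: mult_pos_neg)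
  have "(1 - a^(n+1) - 2*((4 - 9*a + 5*a^3)/8)) * (real n+3) - 2*(15/8*(a - a^3)) * (real n+1)
     = a * (12 - 6*real n + 10*real n*a^2 - 4*(real n+3)*a^n) / 4"
    by (simp add: algebra_simps power2_eq_square power3_eq_cube) (simp add: field_simps)
  then have "(1 - a^(n+1) - 2*((4 - 9*a + 5*a^3)/8)) * (real n+3) - 2*(15/8*(a - a^3)) * (real n+1) < 0"
    using neg by linarith
  then show ?thesis by (rule frac2_neg[rotated 2]) auto
qed


definition q0 :: "real \<Rightarrow> real" where "q0 a = (4 - 9*a + 5*a^3)/8"
definition q1 :: "real \<Rightarrow> real" where "q1 a = 3/4*(1-a^2)"
definition q2 :: "real \<Rightarrow> real" where "q2 a = 15/8*(a - a^3)"
definition Qc :: "real \<Rightarrow> nat \<Rightarrow> real" where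
  "Qc a n = (if n = 0 then q0 a else if n = 1 then q1 a else if n = 2 then q2 a else 0)"

lemma sum3: "(\<Sum>j<(3::nat). f j) = f 0 + f 1 + (f 2 :: real)"
  by (simp add: numeral_3_eq_3 lessThan_Suc numeral_2_eq_2)

lemma sum4: "(\<Sum>j<(4::nat). f j) = f 0 + f 1 + f 2 + (f 3 :: real)"
  by (simp add: numeral_eq_Suc lessThan_Suc)

lemma Qf_pf: "(\<lambda>t. (4 - 9*a + 5*a^3) / 8 + 3/4 * (1 - a^2) * t + 15/8 * (a - a^3) * t^2) = pf (Qc a) 3"
  unfolding pf_def by (auto simp: fun_eq_iff sum3 Qc_def q0_def q1_def q2_def)

lemma G_formula: assumes "-1 \<le> a" "a \<le> 1"
  shows "ip (\<lambda>t. psi a t - pf d m t) (pw n) = (1 - a^Suc n)/Suc n - (\<Sum>j<m. d j * mom (j+n))"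
  by (simp add: ip_diff_left[OF inL2_psi inL2_pf inL2_pw] ip_psi_pw[OF assms] ip_pf_pw)

definition GQ :: "real \<Rightarrow> nat \<Rightarrow> real" where
  "GQ a n = (1 - a^Suc n)/Suc n - (q0 a * mom n + q1 a * mom (n+1) + q2 a * mom (n+2))"

lemma GQ_ip: assumes "-1 \<le> a" "a \<le> 1"
  shows "ip (\<lambda>t. psi a t - pf (Qc a) 3 t) (pw n) = GQ a n"
  unfolding G_formula[OF assms] GQ_def by (simp add: sum3 Qc_def)

lemma GQ_012: "GQ a 0 = 0" "GQ a 1 = 0" "GQ a 2 = 0"
  unfolding GQ_def mom_def q0_def q1_def q2_def
  by (simp_all add: field_simps power2_eq_square power3_eq_cube)

lemma p4: "(a::real)^4 = a*(a*(a*a))" by (simp add: numeral_eq_Suc)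

lemma GQ_3: "GQ a 3 = (1 - a^2) * (5*a^2 - 1) / 20"
  unfolding GQ_def mom_def q0_def q1_def q2_def
  by (simp add: field_simps power2_eq_square power3_eq_cube p4)

lemma GQ_neg: assumes a0: "0 < a" and a1: "a^2 \<le> 1/5" and n: "4 \<le> n"
  shows "GQ a n < 0"
proof (cases "even n")
  case True
  then have m: "mom n = 2/(real n+1)" "mom (n+1) = 0" "mom (n+2) = 2/(real n+3)"
    unfolding mom_parity by auto
  have "GQ a n = (1 - a^(n+1))/(real n+1) - (2*q0 a/(real n+1) + 2*q2 a/(real n+3))"
    unfolding GQ_def m by (simp add: add.commute mult.commute)
  also have "\<dots> = (1 - a^(n+1) - 2*q0 a)/(real n+1) - 2*q2 a/(real n+3)"
    by (simp add: diff_divide_distrib)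
  also have "\<dots> = (1 - a^(n+1) - 2*((4 - 9*a + 5*a^3)/8))/(real n+1) - 2*(15/8*(a - a^3))/(real n+3)"
    unfolding q0_def q2_def ..
  also have "\<dots> < 0" by (rule even_neg[OF a0 a1 n])
  finally show ?thesis .
next
  case False
  then obtain m where nm: "n = 2*m+1" by (metis oddE)
  then have m2: "2 \<le> m" using n by simp
  have mm: "mom n = 0" "mom (n+1) = 2/(2*real m+3)" "mom (n+2) = 0"
    unfolding mom_parity nm by auto
  have ap: "a^Suc n = (a^2)^(m+1)"
  proof -
    have "Suc n = 2 * (m+1)" unfolding nm by simp
    then show ?thesis by (simp only: power_mult)
  qed
  have sn: "real (Suc n) = 2*real m+2" unfolding nm by simp
  have "GQ a n = (1 - (a^2)^(m+1)) / (2*real m+2) - q1 a * (2/(2*real m+3))"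
    unfolding GQ_def mm ap sn by simp
  also have "q1 a * (2/(2*real m+3)) = 3*(1-a^2)/(2*(2*real m+3))"
  proof -
    have "(0::real) < 4*real m+6" by simp
    then show ?thesis unfolding q1_def by (simp add: field_simps)
  qed
  finally have "GQ a n = (1 - (a^2)^(m+1)) / (2*real m+2) - 3*(1-a^2)/(2*(2*real m+3))" .
  also have "\<dots> < 0" using a0 a1 m2 by (intro odd_neg) auto
  finally show ?thesis .
qed

lemma GQ_le: assumes a0: "0 < a" and a1: "a^2 \<le> 1/5"
  shows "GQ a n \<le> 0"
proof -
  consider "n = 0" | "n = 1" | "n = 2" | "n = 3" | "4 \<le> n" by linarith
  then show ?thesis
  proof cases
    case 4
    have "(1 - a^2) * (5*a^2 - 1) \<le> 0" using a1 by (intro mult_nonneg_nonpos) auto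
    then show ?thesis unfolding 4 GQ_3 by simp
  next
    case 5 then show ?thesis using GQ_neg[OF a0 a1] by fastforce
  next
    case 1 then show ?thesis using GQ_012(1) by simp
  next
    case 2 then show ?thesis using GQ_012(2) by simp
  next
    case 3 then show ?thesis using GQ_012(3) by simp
  qed
qed



lemma pf_stable: assumes "\<forall>n\<ge>M. c n = 0" "M \<le> N" shows "pf c N = pf c M"
  using assms(2)
proof (induction N rule: dec_induct)
  case base then show ?case by simp
next
  case (step N)
  then show ?case using assms(1) unfolding pf_def by (auto simp: fun_eq_iff)
qed

lemma rep_finite: assumes rep: "represents c P" and z: "\<forall>n\<ge>M. c n = 0"
  shows "ip (\<lambda>t. pf c M t - P t) (\<lambda>t. pf c M t - P t) = 0"
proof -
  have P: "inL2 P" using rep unfolding represents_def by simp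
  have ev: "\<forall>\<^sub>F N in sequentially. L2sq (pf c N) P = L2sq (pf c M) P"
    using eventually_ge_at_top[of M] by eventually_elim (metis pf_stable[OF z])
  have "(\<lambda>N. L2sq (pf c M) P) \<longlonglongrightarrow> 0"
    using tendsto_cong[OF ev] represents_pf[OF rep] by simp
  then have "L2sq (pf c M) P = 0" using LIMSEQ_const_iff by blast
  then have "ennreal (ip (\<lambda>t. pf c M t - P t) (\<lambda>t. pf c M t - P t)) = 0"
    using L2sq_ip[OF inL2_pf P] by simp
  then show ?thesis using ip_self_nonneg[of "\<lambda>t. pf c M t - P t"] by (simp add: ennreal_eq_0_iff)
qed

lemma transfer_ip: assumes h: "inL2 h" and P: "inL2 P" and R: "inL2 R"
  and z: "ip (\<lambda>t. R t - P t) (\<lambda>t. R t - P t) = 0" and w: "inL2 w"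
  shows "ip (\<lambda>t. h t - P t) w = ip (\<lambda>t. h t - R t) w"
proof -
  have RP: "inL2 (\<lambda>t. R t - P t)" by (intro inL2_diff R P)
  have hR: "inL2 (\<lambda>t. h t - R t)" by (intro inL2_diff h R)
  have "(\<lambda>t. h t - P t) = (\<lambda>t. (h t - R t) + (R t - P t))" by auto
  then have "ip (\<lambda>t. h t - P t) w = ip (\<lambda>t. h t - R t) w + ip (\<lambda>t. R t - P t) w"
    using ip_add_left[OF hR RP w] by simp
  also have "ip (\<lambda>t. R t - P t) w = 0" by (rule ip_zero[OF RP w z])
  finally show ?thesis by simp
qed

lemma ipDg:
  assumes a0: "0 < a" and a1: "a^2 \<le> 1/5" and a2: "a \<le> 1" and rep: "represents c g"
  shows "ip (\<lambda>t. psi a t - pf (Qc a) 3 t) g \<le> 0"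
proof (rule ccontr)
  define D where "D t = psi a t - pf (Qc a) 3 t" for t
  have Dl: "inL2 D" unfolding D_def by (intro inL2_diff inL2_psi inL2_pf)
  have pwD: "ip (pw j) D = GQ a j" for j
  proof -
    have "ip (pw j) D = ip D (pw j)" by (rule ip_comm)
    also have "\<dots> = GQ a j" unfolding D_def[abs_def] using a0 a2 by (intro GQ_ip) auto
    finally show ?thesis .
  qed
  have g: "inL2 g" using rep unfolding represents_def by simp
  have c0: "0 \<le> c n" for n using rep unfolding represents_def by simp
  define X where "X = ip D g"
  define A where "A = ip D D"
  have A: "0 \<le> A" unfolding A_def by (rule ip_self_nonneg)
  assume "\<not> ip (\<lambda>t. psi a t - pf (Qc a) 3 t) g \<le> 0"
  then have X: "X > 0" unfolding X_def D_def[abs_def] by simp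
  define e where "e N = ip (\<lambda>t. pf c N t - g t) (\<lambda>t. pf c N t - g t)" for N
  have e0: "0 \<le> e N" for N unfolding e_def by (rule ip_self_nonneg)
  have "(\<lambda>N. ennreal (e N)) \<longlonglongrightarrow> ennreal 0"
    using represents_pf[OF rep] unfolding e_def by (simp add: L2sq_ip[OF inL2_pf g])
  then have e: "e \<longlonglongrightarrow> 0" using e0 by (subst (asm) tendsto_ennreal_iff) auto
  define l where "l = X / (A + 1)"
  have l: "0 < l" unfolding l_def using X A by simp
  have lA: "l * A < X"
  proof -
    have "l * A = X * (A / (A+1))" unfolding l_def by simp
    also have "\<dots> < X * 1" using X A by (intro mult_strict_left_mono) auto
    finally show ?thesis by simp
  qed
  have "\<forall>\<^sub>F N in sequentially. e N < l * X" using order_tendstoD(2)[OF e] l X by simp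
  then obtain N where eN: "e N < l * X" using eventually_sequentially by auto
  have sN: "ip D (pf c N) \<le> 0"
  proof -
    have "ip D (pf c N) = ip (pf c N) D" by (rule ip_comm)
    also have "\<dots> = (\<Sum>j<N. c j * ip (pw j) D)" by (rule ip_pf_left[OF Dl])
    also have "\<dots> = (\<Sum>j<N. c j * GQ a j)" by (simp add: pwD)
    also have "\<dots> \<le> 0" using GQ_le[OF a0 a1] c0 by (intro sum_nonpos mult_nonneg_nonpos) auto
    finally show ?thesis .
  qed
  have "X = ip D (pf c N) - ip D (\<lambda>t. pf c N t - g t)"
    unfolding X_def using ip_diff_right[OF inL2_pf g Dl, of c N] by simp
  also have "\<dots> \<le> 0 + \<bar>ip D (\<lambda>t. pf c N t - g t)\<bar>" using sN by simp
  also have "\<bar>ip D (\<lambda>t. pf c N t - g t)\<bar> \<le> (l * A + e N / l) / 2"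
    unfolding A_def e_def by (rule ip_amgm[OF Dl inL2_diff[OF inL2_pf g] l])
  also have "e N / l < X" using eN l by (simp add: divide_less_eq mult.commute)
  then have "(l * A + e N / l) / 2 < X" using lA by simp
  finally show False by simp
qed

lemma main_ineq:
  assumes a0: "0 < a" and a1: "a^2 \<le> 1/5" and a2: "a \<le> 1" and rep: "represents c g"
  shows "ip (\<lambda>t. psi a t - pf (Qc a) 3 t) (\<lambda>t. psi a t - pf (Qc a) 3 t)
       + ip (\<lambda>t. pf (Qc a) 3 t - g t) (\<lambda>t. pf (Qc a) 3 t - g t)
       \<le> ip (\<lambda>t. psi a t - g t) (\<lambda>t. psi a t - g t)"
proof -
  define D where "D t = psi a t - pf (Qc a) 3 t" for t
  define V where "V t = pf (Qc a) 3 t - g t" for t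
  have g: "inL2 g" using rep unfolding represents_def by simp
  have Dl: "inL2 D" unfolding D_def by (intro inL2_diff inL2_psi inL2_pf)
  have pwD: "ip (pw j) D = GQ a j" for j
  proof -
    have "ip (pw j) D = ip D (pw j)" by (rule ip_comm)
    also have "\<dots> = GQ a j" unfolding D_def[abs_def] using a0 a2 by (intro GQ_ip) auto
    finally show ?thesis .
  qed
  have Vl: "inL2 V" unfolding V_def by (intro inL2_diff inL2_pf g)
  have DQ: "ip D (pf (Qc a) 3) = 0"
  proof -
    have "ip D (pf (Qc a) 3) = ip (pf (Qc a) 3) D" by (rule ip_comm)
    also have "\<dots> = (\<Sum>j<3. Qc a j * ip (pw j) D)" by (rule ip_pf_left[OF Dl])
    also have "\<dots> = (\<Sum>j<3. Qc a j * GQ a j)" by (simp add: pwD)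
    also have "\<dots> = 0" unfolding sum3 GQ_012 by simp
    finally show ?thesis .
  qed
  have Dg: "ip D g \<le> 0" unfolding D_def[abs_def] by (rule ipDg[OF a0 a1 a2 rep])
  have DV: "0 \<le> ip D V"
    unfolding V_def using ip_diff_right[OF inL2_pf g Dl, of "Qc a" 3] DQ Dg by simp
  have hg: "(\<lambda>t. psi a t - g t) = (\<lambda>t. D t + V t)" unfolding D_def V_def by auto
  have "ip (\<lambda>t. D t + V t) (\<lambda>t. D t + V t) = ip D (\<lambda>t. D t + V t) + ip V (\<lambda>t. D t + V t)"
    by (rule ip_add_left[OF Dl Vl inL2_add[OF Dl Vl]])
  also have "ip D (\<lambda>t. D t + V t) = ip D D + ip D V"
  proof -
    have "ip D (\<lambda>t. D t + V t) = ip (\<lambda>t. D t + V t) D" by (rule ip_comm)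
    also have "\<dots> = ip D D + ip V D" by (rule ip_add_left[OF Dl Vl Dl])
    also have "ip V D = ip D V" by (rule ip_comm)
    finally show ?thesis .
  qed
  also have "ip V (\<lambda>t. D t + V t) = ip D V + ip V V"
  proof -
    have "ip V (\<lambda>t. D t + V t) = ip (\<lambda>t. D t + V t) V" by (rule ip_comm)
    also have "\<dots> = ip D V + ip V V" by (rule ip_add_left[OF Dl Vl Vl])
    finally show ?thesis .
  qed
  finally have "ip (\<lambda>t. psi a t - g t) (\<lambda>t. psi a t - g t) = ip D D + 2 * ip D V + ip V V"
    unfolding hg by simp
  then show ?thesis using DV unfolding D_def[abs_def] V_def[abs_def] by simp
qed



lemma mom_vals: "mom 0 = 2" "mom 1 = 0" "mom 2 = 2/3" "mom 3 = 0" "mom 4 = 2/5" "mom 5 = 0" "mom 6 = 2/7"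
  by (simp_all add: mom_def)

lemma a_facts: assumes "0 < a" "a \<le> 1 / sqrt 5"
  shows "a^2 \<le> 1/5" "a < 1" "q0 a > 0" "q1 a > 0" "q2 a > 0"
proof -
  have "a^2 \<le> (1/sqrt 5)^2" using assms by (intro power_mono) auto
  then show a2: "a^2 \<le> 1/5" by (simp add: power_divide)
  show a1: "a < 1"
  proof (rule ccontr)
    assume "\<not> a < 1"
    then have "1 \<le> a^2" by (simp add: one_le_power)
    then show False using a2 by simp
  qed
  have ah: "a \<le> 1/2"
  proof (rule ccontr)
    assume "\<not> a \<le> 1/2"
    then have "(1/2)^2 < a^2" by (intro power_strict_mono) auto
    then show False using a2 by (simp add: power2_eq_square)
  qed
  have "0 < 4 - 5*a - 5*a^2" using ah a2 by simp
  moreover have "0 < 1 - a" using a1 by simp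
  ultimately have "0 < (1 - a) * (4 - 5*a - 5*a^2)" by simp
  also have "(1 - a) * (4 - 5*a - 5*a^2) = 4 - 9*a + 5*a^3"
    by (simp add: algebra_simps power2_eq_square power3_eq_cube)
  finally show "q0 a > 0" unfolding q0_def by simp
  have "a^2 < 1" using a2 by simp
  then show "q1 a > 0" unfolding q1_def by simp
  have "a^3 < a" using assms(1) \<open>a^2 < 1\<close> by (simp add: power3_eq_cube power2_eq_square)
  then show "q2 a > 0" unfolding q2_def by simp
qed

lemma Qc_nonneg: "0 < a \<Longrightarrow> a \<le> 1 / sqrt 5 \<Longrightarrow> 0 \<le> Qc a n"
  using a_facts[of a] unfolding Qc_def by auto

lemma Qc_zero: "\<forall>n\<ge>3. Qc a n = 0" unfolding Qc_def by auto

lemma Q_rep: assumes "0 < a" "a \<le> 1 / sqrt 5" shows "represents (Qc a) (pf (Qc a) 3)"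
  unfolding represents_def
proof (intro conjI allI)
  fix n show "0 \<le> Qc a n" using Qc_nonneg assms by auto
next
  show "inL2 (pf (Qc a) 3)" by (rule inL2_pf)
next
  have ev: "\<forall>\<^sub>F N in sequentially. 0 = L2sq (pf (Qc a) N) (pf (Qc a) 3)"
    using eventually_ge_at_top[of 3]
  proof eventually_elim
    case (elim N)
    then have "pf (Qc a) N = pf (Qc a) 3" by (rule pf_stable[OF Qc_zero])
    then show ?case by (simp add: L2sq_def)
  qed
  have "(\<lambda>N. L2sq (pf (Qc a) N) (pf (Qc a) 3)) \<longlonglongrightarrow> 0"
    using tendsto_cong[OF ev, of 0] tendsto_const[of "0::ennreal" sequentially] by blast
  then show "(\<lambda>N. L2sq (\<lambda>t. \<Sum>n<N. Qc a n * t ^ n) (pf (Qc a) 3)) \<longlonglongrightarrow> 0" unfolding pf_def .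
qed

lemma part2: assumes "0 < a" "a \<le> 1 / sqrt 5" shows "is_proj_Aplus (psi a) (pf (Qc a) 3)"
  unfolding is_proj_Aplus_def
proof (intro conjI ballI)
  show "pf (Qc a) 3 \<in> Aplus" unfolding Aplus_def using Q_rep[OF assms] by blast
next
  fix g assume "g \<in> Aplus"
  then obtain c where rep: "represents c g" unfolding Aplus_def by blast
  have g: "inL2 g" using rep unfolding represents_def by simp
  note af = a_facts[OF assms]
  have "ip (\<lambda>t. psi a t - pf (Qc a) 3 t) (\<lambda>t. psi a t - pf (Qc a) 3 t) \<le> ip (\<lambda>t. psi a t - g t) (\<lambda>t. psi a t - g t)"
    using main_ineq[OF assms(1) af(1) _ rep] af(2) ip_self_nonneg[of "\<lambda>t. pf (Qc a) 3 t - g t"] by simp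
  then show "L2sq (psi a) (pf (Qc a) 3) \<le> L2sq (psi a) g"
    by (simp add: L2sq_ip[OF inL2_psi inL2_pf] L2sq_ip[OF inL2_psi g] ennreal_leI)
qed



lemma fwd:
  assumes a: "-1 \<le> a" "a < 1" and proj: "is_proj_Aplus (psi a) P" and rep: "represents c P"
    and S: "{n. c n > 0} = {0,1,2}"
  shows "0 < a \<and> a \<le> 1/sqrt 5"
proof -
  have c0: "0 \<le> c n" for n using rep unfolding represents_def by simp
  have cz: "\<forall>n\<ge>3. c n = 0"
  proof (intro allI impI)
    fix n :: nat assume "3 \<le> n"
    then have "n \<notin> {0,1,2}" by auto
    then have "\<not> c n > 0" using S by blast
    then show "c n = 0" using c0[of n] by simp
  qed
  have cp: "c 0 > 0" "c 1 > 0" "c 2 > 0" using S by blast+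
  have P: "inL2 P" using rep unfolding represents_def by simp
  have z: "ip (\<lambda>t. pf c 3 t - P t) (\<lambda>t. pf c 3 t - P t) = 0" by (rule rep_finite[OF rep cz])
  have eqk: "ip (\<lambda>t. psi a t - P t) (pw k) = (1 - a^Suc k)/Suc k - (\<Sum>j<3. c j * mom (j+k))" for k
    using transfer_ip[OF inL2_psi P inL2_pf z inL2_pw] G_formula[of a c 3 k] a by simp
  have "ip (\<lambda>t. psi a t - P t) (pw 0) = 0" by (rule perturb_eq[OF inL2_psi proj rep cp(1)])
  then have E0: "(1 - a) - (2 * c 0 + 2/3 * c 2) = 0" using eqk[of 0] by (simp add: sum3 mom_def power2_eq_square)
  have "ip (\<lambda>t. psi a t - P t) (pw 1) = 0" by (rule perturb_eq[OF inL2_psi proj rep cp(2)])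
  then have E1: "(1 - a^2)/2 - 2/3 * c 1 = 0" using eqk[of 1] by (simp add: sum3 mom_def power2_eq_square)
  have "ip (\<lambda>t. psi a t - P t) (pw 2) = 0" by (rule perturb_eq[OF inL2_psi proj rep cp(3)])
  then have E2: "(1 - a^3)/3 - (2/3 * c 0 + 2/5 * c 2) = 0" using eqk[of 2] by (simp add: sum3 mom_def power2_eq_square)
  have "ip (\<lambda>t. psi a t - P t) (pw 3) \<le> 0" by (rule perturb_le[OF inL2_psi proj rep])
  then have E3: "(1 - a^4)/4 - 2/5 * c 1 \<le> 0" using eqk[of 3] by (simp add: sum3 mom_def power2_eq_square)
  have c2: "c 2 = 15/8 * (a - a^3)" using E0 E2 by argo
  have c1: "c 1 = 3/4 * (1 - a^2)" using E1 by argo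
  have "\<bar>a\<bar> \<le> 1" using a by auto
  then have "\<bar>a\<bar>^2 \<le> 1^2" by (intro power_mono) auto
  then have "a^2 \<le> 1" by simp
  have apos: "0 < a"
  proof (rule ccontr)
    assume "\<not> 0 < a"
    then have "a \<le> 0" by simp
    moreover have "0 \<le> 1 - a^2" using \<open>a^2 \<le> 1\<close> by simp
    ultimately have "a * (1 - a^2) \<le> 0" by (rule mult_nonpos_nonneg)
    then have "a - a^3 \<le> 0" by (simp add: power3_eq_cube power2_eq_square algebra_simps)
    then show False using cp(3) c2 by simp
  qed
  have "a^2 < 1" using apos a by (simp add: power2_less_1_iff) 
  have "(1 - a^2) * (1 + a^2) / 4 \<le> (1 - a^2) * (3/10)"
  proof -
    have "(1 - a^2) * (1 + a^2) = 1 - a^4" by (simp add: algebra_simps p4 power2_eq_square)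
    then show ?thesis using E3 c1 by simp
  qed
  then have "(1 - a^2) * ((1 + a^2) / 4) \<le> (1 - a^2) * (3/10)" by simp
  moreover have "0 < 1 - a^2" using \<open>a^2 < 1\<close> by simp
  ultimately have "(1 + a^2) / 4 \<le> 3/10" by (rule mult_left_le_imp_le)
  then have "a^2 \<le> 1/5" by simp
  then have "sqrt (a^2) \<le> sqrt (1/5)" by (rule real_sqrt_le_mono)
  then have "a \<le> 1 / sqrt 5" using apos by (simp add: real_sqrt_divide)
  then show ?thesis using apos by simp
qed



lemma bwd:
  assumes a0: "0 < a" and a5: "a \<le> 1/sqrt 5" and proj: "is_proj_Aplus (psi a) P" and rep: "represents c P"
  shows "{n. c n > 0} = {0,1,2}"
proof -
  note af = a_facts[OF a0 a5]
  have a1: "a \<le> 1" using af(2) by simp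
  have P: "inL2 P" using rep unfolding represents_def by simp
  have c0: "0 \<le> c n" for n using rep unfolding represents_def by simp
  have "pf (Qc a) 3 \<in> Aplus" unfolding Aplus_def using Q_rep[OF a0 a5] by blast
  then have le: "L2sq (psi a) P \<le> L2sq (psi a) (pf (Qc a) 3)" using proj unfolding is_proj_Aplus_def by blast
  have i1: "ip (\<lambda>t. psi a t - P t) (\<lambda>t. psi a t - P t) \<le> ip (\<lambda>t. psi a t - pf (Qc a) 3 t) (\<lambda>t. psi a t - pf (Qc a) 3 t)"
    by (rule L2sq_ip'[OF inL2_psi P le inL2_pf])
  have i2: "ip (\<lambda>t. psi a t - pf (Qc a) 3 t) (\<lambda>t. psi a t - pf (Qc a) 3 t)
       + ip (\<lambda>t. pf (Qc a) 3 t - P t) (\<lambda>t. pf (Qc a) 3 t - P t)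
       \<le> ip (\<lambda>t. psi a t - P t) (\<lambda>t. psi a t - P t)"
    by (rule main_ineq[OF a0 af(1) a1 rep])
  have zQP: "ip (\<lambda>t. pf (Qc a) 3 t - P t) (\<lambda>t. pf (Qc a) 3 t - P t) = 0"
    using i1 i2 ip_self_nonneg[of "\<lambda>t. pf (Qc a) 3 t - P t"] by linarith
  have GQk: "ip (\<lambda>t. psi a t - P t) (pw k) = GQ a k" for k
    using transfer_ip[OF inL2_psi P inL2_pf zQP inL2_pw] GQ_ip[of a k] a0 a1 by simp
  have c4: "\<forall>n\<ge>4. c n = 0"
  proof (intro allI impI)
    fix n :: nat assume n: "4 \<le> n"
    show "c n = 0"
    proof (rule ccontr)
      assume "c n \<noteq> 0"
      then have "c n > 0" using c0[of n] by simp
      then have "ip (\<lambda>t. psi a t - P t) (pw n) = 0" by (rule perturb_eq[OF inL2_psi proj rep])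
      then have "GQ a n = 0" using GQk by simp
      then show False using GQ_neg[OF a0 af(1) n] by simp
    qed
  qed
  have zR: "ip (\<lambda>t. pf c 4 t - P t) (\<lambda>t. pf c 4 t - P t) = 0" by (rule rep_finite[OF rep c4])
  define d where "d j = c j - Qc a j" for j
  have Q34: "pf (Qc a) 4 = pf (Qc a) 3" by (rule pf_stable[OF Qc_zero]) simp
  have RQ: "pf d 4 = (\<lambda>t. (pf c 4 t - P t) - (pf (Qc a) 3 t - P t))"
    unfolding d_def pf_diff[symmetric] Q34 by auto
  have RPl: "inL2 (\<lambda>t. pf c 4 t - P t)" by (intro inL2_diff inL2_pf P)
  have QPl: "inL2 (\<lambda>t. pf (Qc a) 3 t - P t)" by (intro inL2_diff inL2_pf P)
  have ipd: "(\<Sum>j<4. d j * mom (j + k)) = 0" for k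
  proof -
    have "(\<Sum>j<4. d j * mom (j + k)) = ip (pf d 4) (pw k)" by (simp add: ip_pf_pw)
    also have "\<dots> = ip (\<lambda>t. pf c 4 t - P t) (pw k) - ip (\<lambda>t. pf (Qc a) 3 t - P t) (pw k)"
      unfolding RQ by (rule ip_diff_left[OF RPl QPl inL2_pw])
    also have "\<dots> = 0" using ip_zero[OF RPl inL2_pw zR] ip_zero[OF QPl inL2_pw zQP] by simp
    finally show ?thesis .
  qed
  have k0: "2 * d 0 + 2/3 * d 2 = 0" using ipd[of 0] by (simp add: sum4 mom_def)
  have k1: "2/3 * d 1 + 2/5 * d 3 = 0" using ipd[of 1] by (simp add: sum4 mom_def)
  have k2: "2/3 * d 0 + 2/5 * d 2 = 0" using ipd[of 2] by (simp add: sum4 mom_def)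
  have k3: "2/5 * d 1 + 2/7 * d 3 = 0" using ipd[of 3] by (simp add: sum4 mom_def)
  have "d 0 = 0" "d 2 = 0" using k0 k2 by argo+
  moreover have "d 1 = 0" "d 3 = 0" using k1 k3 by argo+
  ultimately have cv: "c 0 = q0 a" "c 1 = q1 a" "c 2 = q2 a" "c 3 = 0"
    unfolding d_def Qc_def by auto
  show ?thesis
  proof (rule set_eqI)
    fix n :: nat
    show "n \<in> {n. c n > 0} \<longleftrightarrow> n \<in> {0,1,2}"
    proof (cases "n \<le> 3")
      case True
      then consider "n = 0" | "n = 1" | "n = 2" | "n = 3" by linarith
      then show ?thesis using cv af by cases auto
    next
      case False
      then show ?thesis using c4 by auto
    qed
  qed
qed

theorem proposition1p9:
  shows "(\<forall>a P c. -1 \<le> a \<and> a < 1 \<and> is_proj_Aplus (psi a) P \<and> represents c P \<longrightarrow>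
            ({n. c n > 0} = {0, 1, 2} \<longleftrightarrow> 0 < a \<and> a \<le> 1 / sqrt 5))
       \<and> (\<forall>a. 0 < a \<and> a \<le> 1 / sqrt 5 \<longrightarrow>
            is_proj_Aplus (psi a)
              (\<lambda>t. (4 - 9*a + 5*a^3) / 8 + 3/4 * (1 - a^2) * t + 15/8 * (a - a^3) * t^2))"
proof (intro conjI allI impI)
  fix a P c
  assume h: "-1 \<le> a \<and> a < 1 \<and> is_proj_Aplus (psi a) P \<and> represents c P"
  show "{n. c n > 0} = {0, 1, 2} \<longleftrightarrow> 0 < a \<and> a \<le> 1 / sqrt 5"
    using fwd[of a P c] bwd[of a P c] h by blast
next
  fix a :: real
  assume "0 < a \<and> a \<le> 1 / sqrt 5"
  then show "is_proj_Aplus (psi a) (\<lambda>t. (4 - 9*a + 5*a^3) / 8 + 3/4 * (1 - a^2) * t + 15/8 * (a - a^3) * t^2)"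
    unfolding Qf_pf using part2 by blast
qed

end
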